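(* Let $N,M\ge1$, $\mathcal H_+=\mathbb C^N$, $\mathcal H_-=\mathbb C^M$, $\mathcal H=\mathcal H_+\oplus\mathcal H_-$. Fix $b>0$ and $d_1,\dots,d_M\in i\mathbb R$, and put $B=\mathrm{diag}(b,0,\dots,0)$ ($N\times N$) and $D=\mathrm{diag}(d_1,\dots,d_M)$. For $\alpha=(\alpha_1,\dots,\alpha_M)\in\mathbb C^M$ with $|\alpha_1|^2+\dots+|\alpha_M|^2=1$, let $u$ be the $M\times N$ matrix whose first column is $\alpha$ and whose other columns are zero, and let $$\mu=\begin{pmatrix}0&-Bu^*\\ uB&D\end{pmatrix}.$$ Then for all integers $n\ge1$ and $1\le k\le n+1$ there exist polynomials $p^n_{j,k}$, $j=1,\dots,M$, in $M$ variables with real coefficients depending smoothly on $b,d_1,\dots,d_M$, such that for all such $\alpha$ the matrix $i^{n+1}(\mu H^{n-1}_{k-1}(\mu))_{--}u$ has first column with entries $i\,p^n_{j,k}(|\alpha_1|^2,\dots,|\alpha_M|^2)\,\alpha_j$ ($j=1,\dots,M$) and all other columns zero. Equivalently, the equation $\frac{\partial}{\partial t^n_k}u=i^{n+1}(\mu H^{n-1}_{k-1}(\mu))_{--}u$ becomes $$\frac{\partial}{\partial t^n_k}\alpha_j=i\,p^n_{j,k}(|\alpha_1|^2,\dots,|\alpha_M|^2)\,\alpha_j,\qquad j=1,\dots,M.$$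
   Context: $P_+$ and $P_-$ denote the orthogonal projectors of $\mathcal H$ onto $\mathcal H_+$ and $\mathcal H_-$; for an operator $X$ on $\mathcal H$, $X_{--}$ denotes the block $P_-XP_-$ regarded as an operator on $\mathcal H_-$. For integers $m\ge 0$ and $0\le l\le m+1$ and a matrix $\mu$ on $\mathcal H$, define $$H^m_l(\mu)=\sum_{\substack{i_0,\dots,i_m\in\{0,1\}\\ i_0+\dots+i_m=l}} P_+^{i_0}\mu P_+^{i_1}\mu\cdots\mu P_+^{i_m},$$ with $P_+^0=I$ the identity and $P_+^1=P_+$. *)

theory Defs
  imports "HOL-Analysis.Analysis"
begin

text \<open>Matrices are HOL-Analysis matrices: an M x N complex matrix is
  complex^'n^'m (rows indexed by 'm, columns by 'n).  H_+ = C^N is indexed by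
  the finite type 'n, H_- = C^M by 'm, and H = H_+ (+) H_- by the sum type 'n + 'm
  (Inl = H_+ coordinates, Inr = H_- coordinates).\<close>

definition first_idx :: "'n::{finite,wellorder}" where
  "first_idx = (LEAST i. True)"

definition cadj :: "complex^'n^'m \<Rightarrow> complex^'m^'n" where
  "cadj A = (\<chi> i j. cnj (A $ j $ i))"

definition Pplus :: "complex^('n::finite + 'm::finite)^('n + 'm)" where
  "Pplus = (\<chi> i j. if i = j \<and> isl i then 1 else 0)"

definition block_mat ::
  "complex^'n^'n \<Rightarrow> complex^'m^'n \<Rightarrow> complex^'n^'m \<Rightarrow> complex^'m^'m
     \<Rightarrow> complex^('n::finite + 'm::finite)^('n + 'm)" where
  "block_mat A Bm C Dm = (\<chi> i j. case i of
       Inl a \<Rightarrow> (case j of Inl c \<Rightarrow> A $ a $ c | Inr c \<Rightarrow> Bm $ a $ c)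
     | Inr a \<Rightarrow> (case j of Inl c \<Rightarrow> C $ a $ c | Inr c \<Rightarrow> Dm $ a $ c))"

definition minus_block :: "complex^('n::finite + 'm::finite)^('n + 'm) \<Rightarrow> complex^'m^'m" where
  "minus_block X = (\<chi> a c. X $ Inr a $ Inr c)"

definition Ppow :: "nat \<Rightarrow> complex^('n::finite + 'm::finite)^('n + 'm)" where
  "Ppow i = (if i = 0 then mat 1 else Pplus)"

fun Hword :: "complex^('n::finite + 'm::finite)^('n + 'm) \<Rightarrow> nat \<Rightarrow> (nat \<Rightarrow> nat)
     \<Rightarrow> complex^('n + 'm)^('n + 'm)" where
  "Hword \<mu> 0 i = Ppow (i 0)"
| "Hword \<mu> (Suc m) i = Hword \<mu> m i ** \<mu> ** Ppow (i (Suc m))"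

definition Hml :: "nat \<Rightarrow> nat \<Rightarrow> complex^('n::finite + 'm::finite)^('n + 'm)
     \<Rightarrow> complex^('n + 'm)^('n + 'm)" where
  "Hml m l \<mu> = (\<Sum>i\<in>{i \<in> {..m} \<rightarrow>\<^sub>E {0,1}. (\<Sum>r\<le>m. i r) = l}. Hword \<mu> m i)"

coinductive C_inf_on :: "'a::euclidean_space set \<Rightarrow> ('a \<Rightarrow> real) \<Rightarrow> bool" for U where
  "(\<forall>x\<in>U. f differentiable (at x)) \<Longrightarrow>
   (\<forall>v\<in>Basis. C_inf_on U (\<lambda>x. frechet_derivative f (at x) v)) \<Longrightarrow> C_inf_on U f"

definition poly_eval :: "nat \<Rightarrow> (('m::finite \<Rightarrow> nat) \<Rightarrow> real) \<Rightarrow> ('m \<Rightarrow> real) \<Rightarrow> real" where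
  "poly_eval D c x = (\<Sum>e\<in>{e. \<forall>j. e j \<le> D}. c e * (\<Prod>j\<in>UNIV. x j ^ e j))"

end

theory Submission
  imports Defs
begin


inductive Pp :: "(real \<times> (real^'m::finite) \<Rightarrow> real) \<Rightarrow> bool" where
  Pc: "Pp (\<lambda>x. c)"
| Pfst: "Pp (\<lambda>x. fst x)"
| Psnd: "Pp (\<lambda>x. snd x $ j)"
| Padd: "Pp f \<Longrightarrow> Pp g \<Longrightarrow> Pp (\<lambda>x. f x + g x)"
| Pmul: "Pp f \<Longrightarrow> Pp g \<Longrightarrow> Pp (\<lambda>x. f x * g x)"

lemma Pp_deriv:
  assumes "Pp f"
  shows "\<exists>f'. (\<forall>x. (f has_derivative f' x) (at x)) \<and> (\<forall>v. Pp (\<lambda>x. f' x v))"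
  using assms
proof induction
  case (Pc c)
  show ?case by (rule exI[of _ "\<lambda>x h. 0"]) (auto intro: Pp.intros)
next
  case Pfst
  show ?case
    by (rule exI[of _ "\<lambda>x h. fst h"]) (auto intro: Pp.intros bounded_linear_imp_has_derivative bounded_linear_fst)
next
  case (Psnd j)
  have "bounded_linear (\<lambda>x::real \<times> (real^'a). snd x $ j)"
    by (rule bounded_linear_compose[OF bounded_linear_vec_nth bounded_linear_snd])
  then show ?case
    by (intro exI[of _ "\<lambda>x h. snd h $ j"]) (auto intro: Pp.intros bounded_linear_imp_has_derivative)
next
  case (Padd f g)
  then obtain f' g' where "\<forall>x. (f has_derivative f' x) (at x)" "\<forall>v. Pp (\<lambda>x. f' x v)"
     "\<forall>x. (g has_derivative g' x) (at x)" "\<forall>v. Pp (\<lambda>x. g' x v)" by blast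
  then show ?case
    by (intro exI[of _ "\<lambda>x h. f' x h + g' x h"]) (auto intro: Pp.intros has_derivative_add)
next
  case (Pmul f g)
  then obtain f' g' where "\<forall>x. (f has_derivative f' x) (at x)" "\<forall>v. Pp (\<lambda>x. f' x v)"
     "\<forall>x. (g has_derivative g' x) (at x)" "\<forall>v. Pp (\<lambda>x. g' x v)" by blast
  then show ?case
    by (intro exI[of _ "\<lambda>x h. f x * g' x h + f' x h * g x"]) (use \<open>Pp f\<close> \<open>Pp g\<close> in \<open>auto intro!: Pp.Padd Pp.Pmul has_derivative_mult\<close>)
qed

lemma Pp_Cinf:
  assumes "Pp f" shows "C_inf_on U f"
  using assms
proof (coinduction arbitrary: f rule: C_inf_on.coinduct)
  case (C_inf_on f)
  then obtain f' where d: "\<forall>x. (f has_derivative f' x) (at x)" "\<forall>v. Pp (\<lambda>x. f' x v)"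
    using Pp_deriv by blast
  have e: "frechet_derivative f (at x) = f' x" for x
    using frechet_derivative_at d(1) by metis
  show ?case
    using d by (auto simp: e differentiable_def)
qed



inductive Qq :: "(real \<times> (real^'m::finite) \<Rightarrow> ('m \<Rightarrow> real) \<Rightarrow> real) \<Rightarrow> bool" where
  Qc: "Pp c \<Longrightarrow> Qq (\<lambda>p z. c p)"
| Qz: "Qq g \<Longrightarrow> Qq (\<lambda>p z. z j * g p z)"
| Qadd: "Qq f \<Longrightarrow> Qq g \<Longrightarrow> Qq (\<lambda>p z. f p z + g p z)"
| Qmul: "Pp c \<Longrightarrow> Qq g \<Longrightarrow> Qq (\<lambda>p z. c p * g p z)"

definition mono_m :: "('m::finite \<Rightarrow> nat) \<Rightarrow> ('m \<Rightarrow> real) \<Rightarrow> real" where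
  "mono_m e z = (\<Prod>j\<in>UNIV. z j ^ e j)"

lemma mono_m_upd: "mono_m (e(j := Suc (e j))) z = z j * mono_m e z"
proof -
  have "mono_m (e(j := Suc (e j))) z = z j ^ Suc (e j) * (\<Prod>i\<in>UNIV - {j}. z i ^ e i)"
    unfolding mono_m_def by (subst prod.remove[of _ j]) (auto intro!: prod.cong)
  also have "\<dots> = z j * mono_m e z"
    unfolding mono_m_def by (subst (2) prod.remove[of _ j]) auto
  finally show ?thesis .
qed

lemma sum_list_cmult: "(\<Sum>x\<leftarrow>xs. (c::real) * f x) = c * (\<Sum>x\<leftarrow>xs. f x)"
  by (induction xs) (auto simp: algebra_simps)

lemma Qq_list:
  assumes "Qq g"
  shows "\<exists>ts. (\<forall>t\<in>set ts. Pp (fst t)) \<and> (\<forall>p z. g p z = (\<Sum>t\<leftarrow>ts. fst t p * mono_m (snd t) z))"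
  using assms
proof induction
  case (Qc c)
  show ?case using Qc by (intro exI[of _ "[(c, \<lambda>_. 0)]"]) (auto simp: mono_m_def)
next
  case (Qz g j)
  then obtain ts where ts: "\<forall>t\<in>set ts. Pp (fst t)" "\<forall>p z. g p z = (\<Sum>t\<leftarrow>ts. fst t p * mono_m (snd t) z)" by blast
  show ?case
  proof (intro exI[of _ "map (\<lambda>t. (fst t, (snd t)(j := Suc (snd t j)))) ts"] conjI allI)
    show "\<forall>t\<in>set (map (\<lambda>t. (fst t, (snd t)(j := Suc (snd t j)))) ts). Pp (fst t)" using ts by auto
    fix p z
    show "z j * g p z = (\<Sum>t\<leftarrow>map (\<lambda>t. (fst t, (snd t)(j := Suc (snd t j)))) ts. fst t p * mono_m (snd t) z)"
    proof -
      have h: "g p z = (\<Sum>t\<leftarrow>ts. fst t p * mono_m (snd t) z)" using ts(2) by blast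
      show ?thesis unfolding h by (simp add: o_def mono_m_upd sum_list_cmult algebra_simps)
    qed
  qed
next
  case (Qadd f g)
  then obtain ts ss where ts: "\<forall>t\<in>set ts. Pp (fst t)" "\<forall>p z. f p z = (\<Sum>t\<leftarrow>ts. fst t p * mono_m (snd t) z)"
    and ss: "\<forall>t\<in>set ss. Pp (fst t)" "\<forall>p z. g p z = (\<Sum>t\<leftarrow>ss. fst t p * mono_m (snd t) z)" by blast
  show ?case using ts ss by (intro exI[of _ "ts @ ss"]) auto
next
  case (Qmul c g)
  then obtain ts where ts: "\<forall>t\<in>set ts. Pp (fst t)" "\<forall>p z. g p z = (\<Sum>t\<leftarrow>ts. fst t p * mono_m (snd t) z)" by blast
  show ?case
  proof (intro exI[of _ "map (\<lambda>t. (\<lambda>p. c p * fst t p, snd t)) ts"] conjI allI)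
    show "\<forall>t\<in>set (map (\<lambda>t. (\<lambda>p. c p * fst t p, snd t)) ts). Pp (fst t)" using ts Qmul by (auto intro: Pp.Pmul)
    fix p z
    show "c p * g p z = (\<Sum>t\<leftarrow>map (\<lambda>t. (\<lambda>p. c p * fst t p, snd t)) ts. fst t p * mono_m (snd t) z)"
    proof -
      have h: "g p z = (\<Sum>t\<leftarrow>ts. fst t p * mono_m (snd t) z)" using ts(2) by blast
      show ?thesis unfolding h by (simp add: o_def sum_list_cmult algebra_simps)
    qed
  qed
qed

lemma finite_box: "finite {e::'m::finite \<Rightarrow> nat. \<forall>j. e j \<le> D}"
proof -
  have "{e::'m \<Rightarrow> nat. \<forall>j. e j \<le> D} = Pi\<^sub>E UNIV (\<lambda>_. {..D})"
    by (auto simp: PiE_UNIV_domain Pi_def)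
  then show ?thesis by (simp add: finite_PiE)
qed

lemma list_poly_eval:
  assumes "\<forall>t\<in>set ts. \<forall>j. snd t j \<le> D"
  shows "poly_eval D (\<lambda>e. (\<Sum>t\<leftarrow>ts. if snd t = e then fst t p else 0)) z
         = (\<Sum>t\<leftarrow>ts. fst t p * mono_m (snd t) z)"
  using assms
proof (induction ts)
  case Nil
  then show ?case by (simp add: poly_eval_def)
next
  case (Cons t ts)
  have "poly_eval D (\<lambda>e. (\<Sum>t\<leftarrow>t#ts. if snd t = e then fst t p else 0)) z =
     (\<Sum>e\<in>{e. \<forall>j. e j \<le> D}. (if snd t = e then fst t p * mono_m e z else 0))
     + poly_eval D (\<lambda>e. (\<Sum>t\<leftarrow>ts. if snd t = e then fst t p else 0)) z"
    unfolding poly_eval_def mono_m_def by (auto simp: sum.distrib[symmetric] algebra_simps intro!: sum.cong)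
  also have "(\<Sum>e\<in>{e. \<forall>j. e j \<le> D}. (if snd t = e then fst t p * mono_m e z else 0)) = fst t p * mono_m (snd t) z"
    using Cons.prems by (simp add: sum.delta' finite_box)
  finally show ?case using Cons by simp
qed

lemma Pp_sum_list: "(\<forall>t\<in>set ts. Pp (f t)) \<Longrightarrow> Pp (\<lambda>p. \<Sum>t\<leftarrow>ts. f t p)"
  by (induction ts) (auto intro: Pp.intros)

lemma Qq_poly:
  assumes "Qq g"
  shows "\<exists>D0. \<forall>D\<ge>D0. \<exists>c. (\<forall>e. Pp (c e)) \<and> (\<forall>p z. g p z = poly_eval D (\<lambda>e. c e p) z)"
proof -
  obtain ts where ts: "\<forall>t\<in>set ts. Pp (fst t)" "\<forall>p z. g p z = (\<Sum>t\<leftarrow>ts. fst t p * mono_m (snd t) z)"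
    using Qq_list[OF assms] by blast
  define D0 where "D0 = Max ({0} \<union> {snd t j |t j. t \<in> set ts})"
  have fin: "finite {snd t j |t j. t \<in> set ts}"
  proof -
    have "{snd t j |t j. t \<in> set ts} = (\<Union>t\<in>set ts. range (snd t))" by fastforce
    then show ?thesis by simp
  qed
  have bd: "\<forall>t\<in>set ts. \<forall>j. snd t j \<le> D0"
  proof (intro ballI allI)
    fix t j assume "t \<in> set ts"
    then have "snd t j \<in> {0} \<union> {snd t j |t j. t \<in> set ts}" by blast
    then show "snd t j \<le> D0" unfolding D0_def using fin by (intro Max_ge) auto
  qed
  show ?thesis
  proof (intro exI[of _ D0] allI impI)
    fix D assume "D0 \<le> D"
    then have bd': "\<forall>t\<in>set ts. \<forall>j. snd t j \<le> D" using bd le_trans by blast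
    have P: "Pp (\<lambda>p. \<Sum>t\<leftarrow>ts. if snd t = e then fst t p else 0)" for e
    proof (intro Pp_sum_list ballI)
      fix t assume "t \<in> set ts"
      then show "Pp (\<lambda>p. if snd t = e then fst t p else 0)"
        using ts(1) by (cases "snd t = e") (auto intro: Pp.intros)
    qed
    show "\<exists>c. (\<forall>e. Pp (c e)) \<and> (\<forall>p z. g p z = poly_eval D (\<lambda>e. c e p) z)"
      by (rule exI[of _ "\<lambda>e p. \<Sum>t\<leftarrow>ts. if snd t = e then fst t p else 0"])
         (use P ts(2) list_poly_eval[OF bd'] in auto)
  qed
qed



lemma sum_UNIV_Plus: "(\<Sum>x\<in>(UNIV::('a::finite + 'b::finite) set). f x) = (\<Sum>a\<in>UNIV. f (Inl a)) + (\<Sum>b\<in>UNIV. f (Inr b))"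
proof -
  have "(\<Sum>x\<in>(UNIV::('a + 'b) set). f x) = (\<Sum>x\<in>UNIV <+> UNIV. f x)" by simp
  also have "\<dots> = (\<Sum>a\<in>UNIV. f (Inl a)) + (\<Sum>b\<in>UNIV. f (Inr b))"
    by (subst sum.Plus) (auto simp: o_def)
  finally show ?thesis .
qed

definition muF :: "real \<Rightarrow> complex^'m::finite \<Rightarrow> complex^'m \<Rightarrow> complex^('n::{finite,wellorder} + 'm)^('n + 'm)" where
  "muF b d \<alpha> = (let B = (\<chi> a c'. if a = c' \<and> a = first_idx then complex_of_real b else 0)
                   :: complex^('n::{finite,wellorder})^('n::{finite,wellorder});
             Dm = (\<chi> a c'. if a = c' then d $ a else 0) :: complex^'m^'m;
             u = (\<chi> a c'. if c' = first_idx then \<alpha> $ a else 0) :: complex^('n::{finite,wellorder})^'m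
          in block_mat 0 (- (B ** cadj u)) (u ** B) Dm)"

lemma ifm: "(if P then x else (0::complex)) * z = (if P then x * z else 0)" by simp
lemma ifm2: "z * (if P then x else (0::complex)) = (if P then z * x else 0)" by simp

lemma muF_entries:
  fixes b d \<alpha>
  defines "M \<equiv> (muF b d \<alpha> :: complex^('n::{finite,wellorder} + 'm::finite)^('n + 'm))"
  shows "M $ Inl a $ Inl c = 0"
    "M $ Inl a $ Inr j = (if a = first_idx then - complex_of_real b * cnj (\<alpha> $ j) else 0)"
    "M $ Inr j $ Inl c = (if c = first_idx then complex_of_real b * \<alpha> $ j else 0)"
    "M $ Inr j $ Inr l = (if j = l then d $ j else 0)"
  unfolding M_def
  by (simp_all add: muF_def Let_def block_mat_def matrix_matrix_mult_def cadj_def sum.delta sum.delta'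
      cong: if_cong)
    (auto simp: ifm ifm2 sum.delta sum.delta' cong: if_cong)

lemma muF_Inl:
  "((muF b d \<alpha> :: complex^('n::{finite,wellorder} + 'm::finite)^('n + 'm)) *v v) $ Inl a =
     (if a = first_idx then - complex_of_real b * (\<Sum>j\<in>UNIV. cnj (\<alpha> $ j) * v $ Inr j) else 0)"
  by (simp add: matrix_vector_mult_def sum_UNIV_Plus muF_entries sum_distrib_left sum_negf mult.assoc)

lemma muF_Inr:
  "((muF b d \<alpha> :: complex^('n::{finite,wellorder} + 'm::finite)^('n + 'm)) *v v) $ Inr a =
     complex_of_real b * \<alpha> $ a * v $ Inl first_idx + d $ a * v $ Inr a"
  by (simp add: matrix_vector_mult_def sum_UNIV_Plus muF_entries ifm sum.delta sum.delta' cong: if_cong)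



definition zv :: "complex^'m::finite \<Rightarrow> 'm \<Rightarrow> real" where "zv \<alpha> = (\<lambda>j. (cmod (\<alpha> $ j))\<^sup>2)"
definition dvec :: "real^'m::finite \<Rightarrow> complex^'m" where "dvec \<delta> = (\<chi> j. \<i> * complex_of_real (\<delta> $ j))"

definition vecF :: "nat \<Rightarrow> (real \<times> (real^'m::finite) \<Rightarrow> ('m \<Rightarrow> real) \<Rightarrow> real)
   \<Rightarrow> ('m \<Rightarrow> real \<times> (real^'m) \<Rightarrow> ('m \<Rightarrow> real) \<Rightarrow> real)
   \<Rightarrow> real \<Rightarrow> real^'m \<Rightarrow> complex^'m \<Rightarrow> complex^('n::{finite,wellorder} + 'm)" where
  "vecF t h g b \<delta> \<alpha> = (\<chi> i. case i of
      Inl a \<Rightarrow> if a = first_idx then \<i> ^ (t + 1) * complex_of_real (h (b, \<delta>) (zv \<alpha>)) else 0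
    | Inr j \<Rightarrow> \<i> ^ t * complex_of_real (g j (b, \<delta>) (zv \<alpha>)) * \<alpha> $ j)"

definition cls :: "nat \<Rightarrow> (real \<Rightarrow> real^'m::finite \<Rightarrow> complex^'m \<Rightarrow> complex^('n::{finite,wellorder} + 'm)) \<Rightarrow> bool" where
  "cls t F \<longleftrightarrow> (\<exists>h g. Qq h \<and> (\<forall>j. Qq (g j)) \<and> (\<forall>b \<delta> \<alpha>. F b \<delta> \<alpha> = vecF t h g b \<delta> \<alpha>))"

lemma Qq_zero: "Qq (\<lambda>p z. 0)"
  using Qq.Qc[OF Pp.Pc[of 0]] by simp

lemma Qq_sum: "finite S \<Longrightarrow> (\<forall>j\<in>S. Qq (f j)) \<Longrightarrow> Qq (\<lambda>p z. \<Sum>j\<in>S. f j p z)"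
  by (induction rule: finite_induct) (auto intro: Qq_zero Qq.Qadd)

lemma vec_sum_eq: "(v::'a^('n::finite + 'm::finite)) = w \<longleftrightarrow> (\<forall>a. v $ Inl a = w $ Inl a) \<and> (\<forall>j. v $ Inr j = w $ Inr j)"
  by (metis obj_sumE vec_eq_iff)

lemma cls_zero: "cls t (\<lambda>b \<delta> \<alpha>. 0)"
  unfolding cls_def
  by (intro exI[of _ "\<lambda>p z. 0"] exI[of _ "\<lambda>j p z. 0"]) (auto simp: Qq_zero vec_sum_eq vecF_def)

lemma cls_add: assumes "cls t F" "cls t G" shows "cls t (\<lambda>b \<delta> \<alpha>. F b \<delta> \<alpha> + G b \<delta> \<alpha>)"
proof -
  obtain h g where 1: "Qq h" "\<forall>j. Qq (g j)" "\<forall>b \<delta> \<alpha>. F b \<delta> \<alpha> = vecF t h g b \<delta> \<alpha>"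
    using assms(1) unfolding cls_def by blast
  obtain h' g' where 2: "Qq h'" "\<forall>j. Qq (g' j)" "\<forall>b \<delta> \<alpha>. G b \<delta> \<alpha> = vecF t h' g' b \<delta> \<alpha>"
    using assms(2) unfolding cls_def by blast
  show ?thesis unfolding cls_def
    by (intro exI[of _ "\<lambda>p z. h p z + h' p z"] exI[of _ "\<lambda>j p z. g j p z + g' j p z"])
       (use 1 2 in \<open>auto simp: Qq.Qadd vec_sum_eq vecF_def algebra_simps\<close>)
qed

lemma cls_sum: "finite S \<Longrightarrow> (\<forall>i\<in>S. cls t (F i)) \<Longrightarrow> cls t (\<lambda>b \<delta> \<alpha>. \<Sum>i\<in>S. F i b \<delta> \<alpha>)"
  by (induction rule: finite_induct) (auto intro: cls_zero cls_add)

lemma cls_Pplus: "cls t F \<Longrightarrow> cls t (\<lambda>b \<delta> \<alpha>. Pplus *v F b \<delta> \<alpha>)"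
  unfolding cls_def
  apply (elim exE conjE)
  subgoal for h g
    by (intro exI[of _ h] exI[of _ "\<lambda>j p z. 0"])
       (auto simp: Qq_zero vec_sum_eq vecF_def Pplus_def matrix_vector_mult_def sum_UNIV_Plus
          ifm sum.delta cong: if_cong)
  done

lemma cls_Ppow: "cls t F \<Longrightarrow> cls t (\<lambda>b \<delta> \<alpha>. Ppow k *v F b \<delta> \<alpha>)"
  by (auto simp: Ppow_def cls_Pplus)

lemma cls_mu:
  fixes F :: "real \<Rightarrow> real^'m::finite \<Rightarrow> complex^'m \<Rightarrow> complex^('n::{finite,wellorder} + 'm)"
  shows "cls t F \<Longrightarrow> cls (Suc t) (\<lambda>b \<delta> \<alpha>. muF b (dvec \<delta>) \<alpha> *v F b \<delta> \<alpha>)"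
  unfolding cls_def
  apply (elim exE conjE)
  subgoal for h g
  proof (intro exI[of _ "\<lambda>p z. fst p * (\<Sum>j\<in>UNIV. z j * g j p z)"]
      exI[of _ "\<lambda>j p z. fst p * h p z + snd p $ j * g j p z"] conjI allI)
    assume h: "Qq h" and g: "\<forall>j. Qq (g j)" and F: "\<forall>b \<delta> \<alpha>. F b \<delta> \<alpha> = vecF t h g b \<delta> \<alpha>"
    show "Qq (\<lambda>p z. fst p * (\<Sum>j\<in>UNIV. z j * g j p z))"
      using g by (intro Qq.Qmul Pp.Pfst Qq_sum) (auto intro: Qq.Qz)
    show "Qq (\<lambda>p z. fst p * h p z + snd p $ j * g j p z)" for j
      using g h by (intro Qq.Qadd Qq.Qmul Pp.Pfst Pp.Psnd) auto
    fix b :: real and \<delta> :: "real^'m" and \<alpha> :: "complex^'m"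
    have sumz: "(\<Sum>j\<in>UNIV. cnj (\<alpha> $ j) * (\<i> ^ t * complex_of_real (g j (b, \<delta>) (zv \<alpha>)) * \<alpha> $ j))
        = \<i> ^ t * complex_of_real (\<Sum>j\<in>UNIV. zv \<alpha> j * g j (b, \<delta>) (zv \<alpha>))"
    proof -
      have "cnj (\<alpha> $ j) * (\<i> ^ t * complex_of_real (g j (b, \<delta>) (zv \<alpha>)) * \<alpha> $ j)
          = \<i> ^ t * complex_of_real (zv \<alpha> j * g j (b, \<delta>) (zv \<alpha>))" (is "?L j = ?R j") for j
      proof -
        have "complex_of_real (zv \<alpha> j) = \<alpha> $ j * cnj (\<alpha> $ j)"
          unfolding zv_def by (rule complex_norm_square)
        then show ?thesis by (simp add: mult_ac)
      qed
      then have "(\<Sum>j\<in>UNIV. ?L j) = (\<Sum>j\<in>UNIV. ?R j)" by (rule sum.cong[OF refl])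
      also have "\<dots> = \<i> ^ t * complex_of_real (\<Sum>j\<in>UNIV. zv \<alpha> j * g j (b, \<delta>) (zv \<alpha>))"
        by (simp only: of_real_sum sum_distrib_left)
      finally show ?thesis .
    qed
    have ipow: "\<i> ^ (t + 2) = - (\<i> ^ t :: complex)" by (simp add: power_add)
    show "muF b (dvec \<delta>) \<alpha> *v F b \<delta> \<alpha> =
         vecF (Suc t) (\<lambda>p z. fst p * (\<Sum>j\<in>UNIV. z j * g j p z))
          (\<lambda>j p z. fst p * h p z + snd p $ j * g j p z) b \<delta> \<alpha>"
      unfolding vec_sum_eq
    proof (intro conjI allI)
      fix a
      show "(muF b (dvec \<delta>) \<alpha> *v F b \<delta> \<alpha>) $ Inl a = vecF (Suc t) (\<lambda>p z. fst p * (\<Sum>j\<in>UNIV. z j * g j p z))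
          (\<lambda>j p z. fst p * h p z + snd p $ j * g j p z) b \<delta> \<alpha> $ Inl a"
        unfolding F[rule_format] muF_Inl
        by (simp add: vecF_def sumz ipow del: of_real_sum)
    next
      fix j
      show "(muF b (dvec \<delta>) \<alpha> *v F b \<delta> \<alpha>) $ Inr j = vecF (Suc t) (\<lambda>p z. fst p * (\<Sum>j\<in>UNIV. z j * g j p z))
          (\<lambda>j p z. fst p * h p z + snd p $ j * g j p z) b \<delta> \<alpha> $ Inr j"
        unfolding F[rule_format] muF_Inr
        by (simp add: vecF_def dvec_def algebra_simps)
    qed
  qed
  done



lemma cls_Hword:
  fixes F :: "real \<Rightarrow> real^'m::finite \<Rightarrow> complex^'m \<Rightarrow> complex^('n::{finite,wellorder} + 'm)"
  shows "cls t F \<Longrightarrow> cls (t + m) (\<lambda>b \<delta> \<alpha>. Hword (muF b (dvec \<delta>) \<alpha>) m i *v F b \<delta> \<alpha>)"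
proof (induction m arbitrary: t F)
  case 0
  then show ?case by (simp add: cls_Ppow)
next
  case (Suc m)
  have "cls (Suc t) (\<lambda>b \<delta> \<alpha>. muF b (dvec \<delta>) \<alpha> *v (Ppow (i (Suc m)) *v F b \<delta> \<alpha>))"
    by (intro cls_mu cls_Ppow Suc.prems)
  from Suc.IH[OF this] show ?case
    by (simp add: matrix_vector_mul_assoc matrix_mul_assoc)
qed

lemma sum_mvmult: "(\<Sum>i\<in>S. A i) *v x = (\<Sum>i\<in>S. A i *v x)"
  by (induction S rule: infinite_finite_induct) (auto simp: matrix_vector_mult_add_rdistrib)

lemma cls_Hml:
  fixes F :: "real \<Rightarrow> real^'m::finite \<Rightarrow> complex^'m \<Rightarrow> complex^('n::{finite,wellorder} + 'm)"
  assumes "cls t F"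
  shows "cls (t + m) (\<lambda>b \<delta> \<alpha>. Hml m l (muF b (dvec \<delta>) \<alpha>) *v F b \<delta> \<alpha>)"
proof -
  have fin: "finite {i \<in> {..m} \<rightarrow>\<^sub>E {0::nat,1}. (\<Sum>r\<le>m. i r) = l}"
    by (rule finite_subset[OF _ finite_PiE[of "{..m}" "\<lambda>_. {0::nat,1}"]]) auto
  show ?thesis
    unfolding Hml_def sum_mvmult
    by (rule cls_sum[OF fin]) (use cls_Hword[OF assms] in auto)
qed

lemma ii_pow: "\<i> ^ n * \<i> ^ n = (-1::complex) ^ n"
proof -
  have "\<i> ^ n * \<i> ^ n = (\<i> * \<i>) ^ n" by (simp only: power_mult_distrib)
  then show ?thesis by simp
qed

theorem proposition4p1:
  fixes n k :: nat
  assumes "1 \<le> n" and "1 \<le> k" and "k \<le> n + 1"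
  shows "\<exists>(D::nat) (c :: 'm::finite \<Rightarrow> ('m \<Rightarrow> nat) \<Rightarrow> real \<times> (real^'m) \<Rightarrow> real).
     (\<forall>j e. C_inf_on ({0<..} \<times> UNIV) (c j e)) \<and>
     (\<forall>(b::real) (d::complex^'m) (\<alpha>::complex^'m).
        0 < b \<longrightarrow> (\<forall>j. Re (d $ j) = 0) \<longrightarrow> (\<Sum>j\<in>UNIV. (cmod (\<alpha> $ j))\<^sup>2) = 1 \<longrightarrow>
        (let B = (\<chi> a c'. if a = c' \<and> a = first_idx then complex_of_real b else 0)
                   :: complex^('n::{finite,wellorder})^('n::{finite,wellorder});
             Dm = (\<chi> a c'. if a = c' then d $ a else 0) :: complex^'m^'m;
             u = (\<chi> a c'. if c' = first_idx then \<alpha> $ a else 0) :: complex^('n::{finite,wellorder})^'m;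
             \<mu> = block_mat 0 (- (B ** cadj u)) (u ** B) Dm;
             R = (\<chi> a c'. \<i> ^ (n + 1) * (minus_block (\<mu> ** Hml (n - 1) (k - 1) \<mu>) ** u) $ a $ c')
        in \<forall>a c'. R $ a $ c' =
             (if c' = first_idx
              then \<i> * complex_of_real
                     (poly_eval D (\<lambda>e. c a e (b, \<chi> j. Im (d $ j))) (\<lambda>j. (cmod (\<alpha> $ j))\<^sup>2)) * \<alpha> $ a
              else 0)))"
proof -
  define v0 :: "real \<Rightarrow> real^'m \<Rightarrow> complex^'m \<Rightarrow> complex^('n + 'm)"
    where "v0 = vecF 0 (\<lambda>_ _. 0) (\<lambda>_ _ _. 1)"
  have "cls 0 v0"
    unfolding cls_def v0_def
    using Qq.Qc[OF Pp.Pc[of 1]] by (intro exI[of _ "\<lambda>_ _. 0"] exI[of _ "\<lambda>_ _ _. 1"]) (auto simp: Qq_zero)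
  from cls_mu[OF cls_Hml[OF this, of "n - 1" "k - 1"]]
  have "cls n (\<lambda>b \<delta> \<alpha>. muF b (dvec \<delta>) \<alpha> *v (Hml (n - 1) (k - 1) (muF b (dvec \<delta>) \<alpha>) *v v0 b \<delta> \<alpha>))"
    using assms(1) by simp
  then obtain h g where hg: "\<forall>j. Qq (g j)"
    "\<And>b \<delta> \<alpha>. muF b (dvec \<delta>) \<alpha> *v (Hml (n - 1) (k - 1) (muF b (dvec \<delta>) \<alpha>) *v v0 b \<delta> \<alpha>) = (vecF n h g b \<delta> \<alpha> :: complex^('n + 'm))"
    unfolding cls_def by blast
  have "\<forall>a. \<exists>D0. \<forall>D\<ge>D0. \<exists>c. (\<forall>e. Pp (c e)) \<and> (\<forall>p z. (-1)^n * g a p z = poly_eval D (\<lambda>e. c e p) z)"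
  proof
    fix a
    have "Qq (\<lambda>p z. (-1)^n * g a p z)" using hg(1) by (intro Qq.Qmul Pp.Pc) auto
    then show "\<exists>D0. \<forall>D\<ge>D0. \<exists>c. (\<forall>e. Pp (c e)) \<and> (\<forall>p z. (-1)^n * g a p z = poly_eval D (\<lambda>e. c e p) z)"
      by (rule Qq_poly)
  qed
  then obtain D0 where D0: "\<And>a D. D \<ge> D0 a \<Longrightarrow> \<exists>c. (\<forall>e. Pp (c e)) \<and> (\<forall>p z. (-1)^n * g a p z = poly_eval D (\<lambda>e. c e p) z)"
    by metis
  define D where "D = Max (range D0)"
  have "\<forall>a. \<exists>c. (\<forall>e. Pp (c e)) \<and> (\<forall>p z. (-1)^n * g a p z = poly_eval D (\<lambda>e. c e p) z)"
    using D0 unfolding D_def by (auto intro!: D0)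
  then obtain c where c: "\<And>a e. Pp (c a e)" "\<And>a p z. (-1)^n * g a p z = poly_eval D (\<lambda>e. c a e p) z"
    by metis
  show ?thesis
  proof (intro exI[of _ D] exI[of _ c] conjI allI impI)
    show "C_inf_on ({0<..} \<times> UNIV) (c j e)" for j e by (rule Pp_Cinf[OF c(1)])
    fix b :: real and d :: "complex^'m" and \<alpha> :: "complex^'m"
    assume "\<forall>j. Re (d $ j) = 0"
    define \<delta> :: "real^'m" where "\<delta> = (\<chi> j. Im (d $ j))"
    have d: "d = dvec \<delta>"
      using \<open>\<forall>j. Re (d $ j) = 0\<close> by (simp add: vec_eq_iff dvec_def \<delta>_def complex_eq_iff)
    define M where "M = (muF b d \<alpha> :: complex^('n + 'm)^('n + 'm))"
    define X where "X = M ** Hml (n - 1) (k - 1) M"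
    define u :: "complex^('n::{finite,wellorder})^'m" where "u = (\<chi> a c'. if c' = first_idx then \<alpha> $ a else 0)"
    have Xv: "X *v v0 b \<delta> \<alpha> = vecF n h g b \<delta> \<alpha>"
      unfolding X_def M_def d using hg(2) by (simp add: matrix_vector_mul_assoc)
    have Xa: "(X *v v0 b \<delta> \<alpha>) $ Inr a = (\<Sum>j\<in>UNIV. X $ Inr a $ Inr j * \<alpha> $ j)" for a
      by (simp add: matrix_vector_mult_def sum_UNIV_Plus v0_def vecF_def) (auto intro!: sum.neutral)
    have main: "\<i> ^ (n + 1) * (minus_block X ** u) $ a $ c' =
             (if c' = first_idx
              then \<i> * complex_of_real
                     (poly_eval D (\<lambda>e. c a e (b, \<delta>)) (\<lambda>j. (cmod (\<alpha> $ j))\<^sup>2)) * \<alpha> $ a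
              else 0)" for a c'
    proof (cases "c' = first_idx")
      case True
      have "(minus_block X ** u) $ a $ c' = (\<Sum>j\<in>UNIV. X $ Inr a $ Inr j * \<alpha> $ j)"
        using True by (simp add: matrix_matrix_mult_def minus_block_def u_def)
      also have "\<dots> = \<i> ^ n * complex_of_real (g a (b, \<delta>) (zv \<alpha>)) * \<alpha> $ a"
        using Xa[of a] Xv by (simp add: vecF_def)
      finally have 1: "(minus_block X ** u) $ a $ c' = \<i> ^ n * complex_of_real (g a (b, \<delta>) (zv \<alpha>)) * \<alpha> $ a" .
      have 2: "poly_eval D (\<lambda>e. c a e (b, \<delta>)) (\<lambda>j. (cmod (\<alpha> $ j))\<^sup>2) = (-1)^n * g a (b, \<delta>) (zv \<alpha>)"
        using c(2)[of a "(b, \<delta>)" "zv \<alpha>"] by (simp add: zv_def)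
      have 3: "\<i> ^ (n + 1) * \<i> ^ n = \<i> * (-1::complex)^n"
      proof -
        have "\<i> ^ (n + 1) * \<i> ^ n = \<i> * (\<i> ^ n * \<i> ^ n)" by (simp add: power_add mult_ac)
        also have "\<i> ^ n * \<i> ^ n = (\<i> * \<i>) ^ n" by (simp only: power_mult_distrib)
        finally show ?thesis by simp
      qed
      show ?thesis using True unfolding 1 2
        by (simp add: 3[symmetric] mult_ac ii_pow)
    next
      case False
      then show ?thesis by (simp add: matrix_matrix_mult_def minus_block_def u_def)
    qed
    show "let B = (\<chi> a c'. if a = c' \<and> a = first_idx then complex_of_real b else 0)
                   :: complex^('n::{finite,wellorder})^('n::{finite,wellorder});
             Dm = (\<chi> a c'. if a = c' then d $ a else 0) :: complex^'m^'m;
             u = (\<chi> a c'. if c' = first_idx then \<alpha> $ a else 0) :: complex^('n::{finite,wellorder})^'m;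
             \<mu> = block_mat 0 (- (B ** cadj u)) (u ** B) Dm;
             R = (\<chi> a c'. \<i> ^ (n + 1) * (minus_block (\<mu> ** Hml (n - 1) (k - 1) \<mu>) ** u) $ a $ c')
        in \<forall>a c'. R $ a $ c' =
             (if c' = first_idx
              then \<i> * complex_of_real
                     (poly_eval D (\<lambda>e. c a e (b, \<chi> j. Im (d $ j))) (\<lambda>j. (cmod (\<alpha> $ j))\<^sup>2)) * \<alpha> $ a
              else 0)"
      using main unfolding X_def M_def u_def \<delta>_def by (simp add: muF_def Let_def)
  qed
qed


end
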